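(* Let $\Sigma$ be a dec-DNNF circuit whose root is a decision node labelled by the variable $x$, with 0-child $u$ and 1-child $w$. Let $S\subseteq\textit{IP}(\Sigma)$ and define $S_u=\{t\mid t\wedge\overline{x}\in S\}\cup(S\cap\textit{IP}(\Sigma_u))$, $S_w=\{t\mid t\wedge x\in S\}\cup(S\cap\textit{IP}(\Sigma_w))$ and $S'=\{t\mid t\in S,\ x\notin var(t)\}$. Then $S_u\subseteq\textit{IP}(\Sigma_u)$ and $S_w\subseteq\textit{IP}(\Sigma_w)$, and $S=\textit{IP}(\Sigma)$ if and only if $S_u=\textit{IP}(\Sigma_u)$, $S_w=\textit{IP}(\Sigma_w)$, and $S'=\max(\{t_u\wedge t_w\mid t_u\in S_u,\ t_w\in S_w\},\models)$.
   Context: A term is a conjunction of literals (possibly empty); $var(t)$ is the set of variables occurring in $t$. A term $t$ is an implicant of $f$ if $t\models f$, and prime if no term obtained by deleting a literal from $t$ is an implicant. $\textit{IP}(\cdot)$ denotes the set of prime implicants of the function computed by a circuit. A dec-DNNF circuit is a rooted DAG whose leaves are labelled $0$, $1$ or a literal and whose internal nodes are decision nodes (labelled by a variable $x$, with 0-child $u$ and 1-child $w$, computing $(\overline{x}\wedge f_u)\vee(x\wedge f_w)$ where $f_u,f_w$ are the functions computed at the children) or $\wedge$-nodes whose children's subcircuits mention pairwise disjoint sets of variables. $\Sigma_v$ denotes the subcircuit rooted at node $v$. For a set $T$ of terms, $\max(T,\models)$ is the set of terms of $T$ that do not entail another term of $T$. *)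

theory Defs
  imports Main
begin

text \<open>Literals: (v, True) is the positive literal v, (v, False) its negation.
  A term is a finite, consistent set of literals (read as their conjunction).\<close>

type_synonym 'v lit = "'v \<times> bool"
type_synonym 'v trm = "'v lit set"

definition is_term :: "'v trm \<Rightarrow> bool" where
  "is_term t \<longleftrightarrow> finite t \<and> \<not> (\<exists>v. (v, True) \<in> t \<and> (v, False) \<in> t)"

definition var_term :: "'v trm \<Rightarrow> 'v set" where
  "var_term t = fst ` t"

definition sat_term :: "('v \<Rightarrow> bool) \<Rightarrow> 'v trm \<Rightarrow> bool" where
  "sat_term \<alpha> t \<longleftrightarrow> (\<forall>l\<in>t. \<alpha> (fst l) = snd l)"

definition implicant :: "'v trm \<Rightarrow> (('v \<Rightarrow> bool) \<Rightarrow> bool) \<Rightarrow> bool" where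
  "implicant t f \<longleftrightarrow> is_term t \<and> (\<forall>\<alpha>. sat_term \<alpha> t \<longrightarrow> f \<alpha>)"

definition prime_implicant :: "'v trm \<Rightarrow> (('v \<Rightarrow> bool) \<Rightarrow> bool) \<Rightarrow> bool" where
  "prime_implicant t f \<longleftrightarrow> implicant t f \<and> (\<forall>l\<in>t. \<not> implicant (t - {l}) f)"

definition term_entails :: "'v trm \<Rightarrow> 'v trm \<Rightarrow> bool" where
  "term_entails t t' \<longleftrightarrow> (\<forall>\<alpha>. sat_term \<alpha> t \<longrightarrow> sat_term \<alpha> t')"

definition max_ent :: "'v trm set \<Rightarrow> 'v trm set" where
  "max_ent T = {t \<in> T. \<not> (\<exists>t'\<in>T. t' \<noteq> t \<and> term_entails t t')}"

text \<open>Circuits (DAG sharing is irrelevant for semantics; represented as trees).\<close>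
datatype 'v circuit =
    CFalse
  | CTrue
  | CLit 'v bool
  | CDec 'v "'v circuit" "'v circuit"   \<comment> \<open>variable, 0-child, 1-child\<close>
  | CAnd "'v circuit list"

fun eval :: "'v circuit \<Rightarrow> ('v \<Rightarrow> bool) \<Rightarrow> bool" where
  "eval CFalse \<alpha> = False"
| "eval CTrue \<alpha> = True"
| "eval (CLit v b) \<alpha> = (\<alpha> v = b)"
| "eval (CDec x u w) \<alpha> = ((\<not> \<alpha> x \<and> eval u \<alpha>) \<or> (\<alpha> x \<and> eval w \<alpha>))"
| "eval (CAnd cs) \<alpha> = (\<forall>c\<in>set cs. eval c \<alpha>)"

fun cvars :: "'v circuit \<Rightarrow> 'v set" where
  "cvars CFalse = {}"
| "cvars CTrue = {}"
| "cvars (CLit v b) = {v}"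
| "cvars (CDec x u w) = insert x (cvars u \<union> cvars w)"
| "cvars (CAnd cs) = (\<Union>c\<in>set cs. cvars c)"

text \<open>dec-DNNF: decision nodes (whose variable does not occur below them, as in the
  standard definition of decision-DNNF where a decision node is an OR of two
  decomposable ANDs) and decomposable AND-nodes.\<close>
fun dec_dnnf :: "'v circuit \<Rightarrow> bool" where
  "dec_dnnf CFalse = True"
| "dec_dnnf CTrue = True"
| "dec_dnnf (CLit v b) = True"
| "dec_dnnf (CDec x u w) =
     (dec_dnnf u \<and> dec_dnnf w \<and> x \<notin> cvars u \<and> x \<notin> cvars w)"
| "dec_dnnf (CAnd cs) =
     ((\<forall>c\<in>set cs. dec_dnnf c) \<and>
      (\<forall>i j. i < length cs \<and> j < length cs \<and> i \<noteq> j \<longrightarrow> cvars (cs ! i) \<inter> cvars (cs ! j) = {}))"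

definition IP :: "'v circuit \<Rightarrow> 'v trm set" where
  "IP C = {t. prime_implicant t (eval C)}"

end

theory Submission
  imports Defs
begin

definition indep :: "'v \<Rightarrow> (('v \<Rightarrow> bool) \<Rightarrow> bool) \<Rightarrow> bool" where
  "indep x f \<longleftrightarrow> (\<forall>\<alpha> b. f (\<alpha>(x:=b)) = f \<alpha>)"

lemma eval_upd: "x \<notin> cvars c \<Longrightarrow> eval c (\<alpha>(x:=b)) = eval c \<alpha>"
  by (induction c) auto

lemma indep_eval: "x \<notin> cvars c \<Longrightarrow> indep x (eval c)"
  unfolding indep_def using eval_upd by metis

lemma sat_upd: "x \<notin> var_term t \<Longrightarrow> sat_term (\<alpha>(x:=b)) t = sat_term \<alpha> t"
  unfolding sat_term_def var_term_def by force

lemma is_term_subset: "is_term t \<Longrightarrow> t' \<subseteq> t \<Longrightarrow> is_term t'"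
  unfolding is_term_def by (meson finite_subset in_mono)

lemma implicant_mono: "implicant t' f \<Longrightarrow> t' \<subseteq> t \<Longrightarrow> is_term t \<Longrightarrow> implicant t f"
  unfolding implicant_def sat_term_def by blast

lemma subset_entails: "t' \<subseteq> t \<Longrightarrow> term_entails t t'"
  unfolding term_entails_def sat_term_def by blast

lemma entails_subset:
  assumes "is_term t" "term_entails t t'" shows "t' \<subseteq> t"
proof
  fix l assume l: "l \<in> t'"
  show "l \<in> t"
  proof (rule ccontr)
    assume nl: "l \<notin> t"
    obtain v c where lv: "l = (v, c)" by force
    define \<alpha> where "\<alpha> = (\<lambda>y. if y = v then \<not> c else (y, True) \<in> t)"
    have "sat_term \<alpha> t"
      unfolding sat_term_def
    proof
      fix k assume k: "k \<in> t"
      obtain y d where kd: "k = (y, d)" by force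
      show "\<alpha> (fst k) = snd k"
      proof (cases "y = v")
        case True
        then have "d = (\<not> c)" using nl k kd lv by (cases d; cases c) auto
        then show ?thesis using True kd \<alpha>_def by simp
      next
        case False
        then show ?thesis using assms(1) k kd unfolding \<alpha>_def is_term_def
          by (cases d) auto
      qed
    qed
    then have "sat_term \<alpha> t'" using assms(2) unfolding term_entails_def by blast
    then show False using l lv unfolding sat_term_def \<alpha>_def by force
  qed
qed

lemma exists_prime:
  assumes "implicant t f" shows "\<exists>p\<subseteq>t. prime_implicant p f"
proof -
  have "finite t" using assms unfolding implicant_def is_term_def by blast
  then show ?thesis using assms
  proof (induction "card t" arbitrary: t rule: less_induct)
    case less
    show ?case
    proof (cases "prime_implicant t f")
      case True then show ?thesis by blast
    next
      case False
      then obtain l where l: "l \<in> t" "implicant (t - {l}) f"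
        using less.prems unfolding prime_implicant_def by blast
      have "card (t - {l}) < card t" using l(1) less.prems(1)
        by (meson card_Diff1_less)
      then obtain p where "p \<subseteq> t - {l}" "prime_implicant p f"
        using less.hyps[of "t - {l}"] l(2) less.prems(1) by blast
      then show ?thesis by blast
    qed
  qed
qed

lemma prime_crit:
  assumes "prime_implicant t f" "t' \<subseteq> t" "implicant t' f" shows "t' = t"
proof (rule ccontr)
  assume "t' \<noteq> t"
  then obtain l where l: "l \<in> t" "l \<notin> t'" using assms(2) by blast
  have "is_term t" using assms(1) unfolding prime_implicant_def implicant_def by blast
  then have "is_term (t - {l})" using is_term_subset[of t "t - {l}"] by blast
  moreover have "t' \<subseteq> t - {l}" using l assms(2) by blast
  ultimately have "implicant (t - {l}) f" using implicant_mono[OF assms(3)] by blast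
  then show False using assms(1) l unfolding prime_implicant_def by blast
qed

lemma pi_no_x:
  assumes "indep x f" "prime_implicant t f" shows "x \<notin> var_term t"
proof
  assume "x \<in> var_term t"
  then obtain b where xb: "(x, b) \<in> t" unfolding var_term_def by force
  have it: "is_term t" using assms(2) unfolding prime_implicant_def implicant_def by blast
  have "implicant (t - {(x,b)}) f"
    unfolding implicant_def
  proof
    show "is_term (t - {(x,b)})" using is_term_subset[OF it] by blast
    show "\<forall>\<alpha>. sat_term \<alpha> (t - {(x, b)}) \<longrightarrow> f \<alpha>"
    proof (intro allI impI)
      fix \<alpha> assume s: "sat_term \<alpha> (t - {(x, b)})"
      have "sat_term (\<alpha>(x:=b)) t"
        unfolding sat_term_def
      proof
        fix l assume l: "l \<in> t"
        show "(\<alpha>(x := b)) (fst l) = snd l"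
        proof (cases "fst l = x")
          case True
          obtain c where lc: "l = (x, c)" using True by (cases l) auto
          have "c = b" using l xb it lc unfolding is_term_def by (cases b; cases c) auto
          then show ?thesis using lc by simp
        next
          case False
          then have "l \<in> t - {(x,b)}" using l by auto
          then show ?thesis using s False unfolding sat_term_def by simp
        qed
      qed
      then have "f (\<alpha>(x:=b))" using assms(2) unfolding prime_implicant_def implicant_def by blast
      then show "f \<alpha>" using assms(1) unfolding indep_def by simp
    qed
  qed
  then show False using assms(2) xb unfolding prime_implicant_def by blast
qed

lemma is_term_insert: "x \<notin> var_term t0 \<Longrightarrow> is_term (insert (x,b) t0) = is_term t0"
  unfolding is_term_def var_term_def by force

lemma lemA:
  assumes "indep x f0" "indep x f1" "x \<notin> var_term t0"
  shows "implicant (insert (x,b) t0) (\<lambda>\<alpha>. (\<not> \<alpha> x \<and> f0 \<alpha>) \<or> (\<alpha> x \<and> f1 \<alpha>))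
     \<longleftrightarrow> implicant t0 (if b then f1 else f0)"
proof
  assume h: "implicant (insert (x,b) t0) (\<lambda>\<alpha>. (\<not> \<alpha> x \<and> f0 \<alpha>) \<or> (\<alpha> x \<and> f1 \<alpha>))"
  show "implicant t0 (if b then f1 else f0)"
    unfolding implicant_def
  proof (intro conjI allI impI)
    show "is_term t0" using h is_term_insert[OF assms(3)] unfolding implicant_def by blast
    fix \<alpha> assume s: "sat_term \<alpha> t0"
    have "sat_term (\<alpha>(x:=b)) (insert (x,b) t0)"
      using sat_upd[OF assms(3)] s unfolding sat_term_def by auto
    then have "(\<not> b \<and> f0 (\<alpha>(x:=b))) \<or> (b \<and> f1 (\<alpha>(x:=b)))"
      using h unfolding implicant_def by force
    then show "(if b then f1 else f0) \<alpha>" using assms(1,2) unfolding indep_def by auto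
  qed
next
  assume h: "implicant t0 (if b then f1 else f0)"
  show "implicant (insert (x,b) t0) (\<lambda>\<alpha>. (\<not> \<alpha> x \<and> f0 \<alpha>) \<or> (\<alpha> x \<and> f1 \<alpha>))"
    unfolding implicant_def
  proof (intro conjI allI impI)
    show "is_term (insert (x,b) t0)" using h is_term_insert[OF assms(3)] unfolding implicant_def by blast
    fix \<alpha> assume s: "sat_term \<alpha> (insert (x,b) t0)"
    then have "\<alpha> x = b" "sat_term \<alpha> t0" unfolding sat_term_def by auto
    then show "(\<not> \<alpha> x \<and> f0 \<alpha>) \<or> (\<alpha> x \<and> f1 \<alpha>)" using h unfolding implicant_def
      by (cases b) auto
  qed
qed

lemma lemB:
  assumes "indep x f0" "indep x f1" "x \<notin> var_term t"
  shows "implicant t (\<lambda>\<alpha>. (\<not> \<alpha> x \<and> f0 \<alpha>) \<or> (\<alpha> x \<and> f1 \<alpha>))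
     \<longleftrightarrow> implicant t f0 \<and> implicant t f1"
proof
  assume h: "implicant t (\<lambda>\<alpha>. (\<not> \<alpha> x \<and> f0 \<alpha>) \<or> (\<alpha> x \<and> f1 \<alpha>))"
  have "f0 \<alpha> \<and> f1 \<alpha>" if s: "sat_term \<alpha> t" for \<alpha>
  proof -
    have "sat_term (\<alpha>(x:=False)) t" "sat_term (\<alpha>(x:=True)) t" using s sat_upd[OF assms(3)] by auto
    then have "f0 (\<alpha>(x:=False))" "f1 (\<alpha>(x:=True))" using h unfolding implicant_def by force+
    then show ?thesis using assms(1,2) unfolding indep_def by simp
  qed
  then show "implicant t f0 \<and> implicant t f1" using h unfolding implicant_def by blast
next
  assume "implicant t f0 \<and> implicant t f1"
  then show "implicant t (\<lambda>\<alpha>. (\<not> \<alpha> x \<and> f0 \<alpha>) \<or> (\<alpha> x \<and> f1 \<alpha>))"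
    unfolding implicant_def by blast
qed

lemma negPI:
  assumes "indep x f0" "indep x f1" "x \<notin> var_term t0"
    and "prime_implicant (insert (x,b) t0) (\<lambda>\<alpha>. (\<not> \<alpha> x \<and> f0 \<alpha>) \<or> (\<alpha> x \<and> f1 \<alpha>))"
  shows "prime_implicant t0 (if b then f1 else f0)"
  unfolding prime_implicant_def
proof
  show "implicant t0 (if b then f1 else f0)"
    using assms(4) lemA[OF assms(1-3)] unfolding prime_implicant_def by blast
  show "\<forall>l\<in>t0. \<not> implicant (t0 - {l}) (if b then f1 else f0)"
  proof (intro ballI notI)
    fix l assume l: "l \<in> t0" and i: "implicant (t0 - {l}) (if b then f1 else f0)"
    have nx: "x \<notin> var_term (t0 - {l})" using assms(3) unfolding var_term_def by blast
    have "l \<noteq> (x,b)" using l assms(3) unfolding var_term_def by force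
    then have eq: "insert (x,b) (t0 - {l}) = insert (x,b) t0 - {l}" by blast
    have "implicant (insert (x,b) t0 - {l}) (\<lambda>\<alpha>. (\<not> \<alpha> x \<and> f0 \<alpha>) \<or> (\<alpha> x \<and> f1 \<alpha>))"
      using lemA[OF assms(1,2) nx, of b] i eq by metis
    then show False using assms(4) l unfolding prime_implicant_def by blast
  qed
qed

lemma posPI:
  assumes "indep x f0" "indep x f1" "x \<notin> var_term t0"
    and "prime_implicant t0 (if b then f1 else f0)"
    and "\<not> implicant t0 (if b then f0 else f1)"
  shows "prime_implicant (insert (x,b) t0) (\<lambda>\<alpha>. (\<not> \<alpha> x \<and> f0 \<alpha>) \<or> (\<alpha> x \<and> f1 \<alpha>))"
  unfolding prime_implicant_def
proof
  show "implicant (insert (x,b) t0) (\<lambda>\<alpha>. (\<not> \<alpha> x \<and> f0 \<alpha>) \<or> (\<alpha> x \<and> f1 \<alpha>))"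
    using assms(4) lemA[OF assms(1-3)] unfolding prime_implicant_def by blast
  show "\<forall>l\<in>insert (x,b) t0. \<not> implicant (insert (x,b) t0 - {l}) (\<lambda>\<alpha>. (\<not> \<alpha> x \<and> f0 \<alpha>) \<or> (\<alpha> x \<and> f1 \<alpha>))"
  proof (intro ballI notI)
    fix l assume l: "l \<in> insert (x,b) t0"
      and i: "implicant (insert (x,b) t0 - {l}) (\<lambda>\<alpha>. (\<not> \<alpha> x \<and> f0 \<alpha>) \<or> (\<alpha> x \<and> f1 \<alpha>))"
    show False
    proof (cases "l = (x,b)")
      case True
      have "(x,b) \<notin> t0" using assms(3) unfolding var_term_def by force
      then have "insert (x,b) t0 - {l} = t0" using True by blast
      then have "implicant t0 f0 \<and> implicant t0 f1" using i lemB[OF assms(1-3)] by simp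
      then show False using assms(5) by (cases b) auto
    next
      case False
      then have l0: "l \<in> t0" using l by blast
      have nx: "x \<notin> var_term (t0 - {l})" using assms(3) unfolding var_term_def by blast
      have eq: "insert (x,b) (t0 - {l}) = insert (x,b) t0 - {l}" using False by blast
      have "implicant (t0 - {l}) (if b then f1 else f0)"
        using lemA[OF assms(1,2) nx, of b] i eq by metis
      then show False using assms(4) l0 unfolding prime_implicant_def by blast
    qed
  qed
qed

lemma max_ent_iff: "t \<in> max_ent T \<longleftrightarrow> t \<in> T \<and> \<not> (\<exists>t'\<in>T. t' \<noteq> t \<and> term_entails t t')"
  unfolding max_ent_def by simp

lemma lemC:
  assumes "indep x f0" "indep x f1" "x \<notin> var_term t"
    and M: "\<And>m. m \<in> M \<longleftrightarrow> (\<exists>tu tw. m = tu \<union> tw \<and> prime_implicant tu f0 \<and> prime_implicant tw f1 \<and> is_term m)"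
  shows "prime_implicant t (\<lambda>\<alpha>. (\<not> \<alpha> x \<and> f0 \<alpha>) \<or> (\<alpha> x \<and> f1 \<alpha>)) \<longleftrightarrow> t \<in> max_ent M"
    (is "?P t \<longleftrightarrow> _")
proof -
  let ?F = "\<lambda>\<alpha>. (\<not> \<alpha> x \<and> f0 \<alpha>) \<or> (\<alpha> x \<and> f1 \<alpha>)"
  have Mimp: "implicant m ?F" if "m \<in> M" for m
  proof -
    from that[unfolded M] obtain tu tw where m: "m = tu \<union> tw" "prime_implicant tu f0" "prime_implicant tw f1" "is_term m"
      by (elim exE conjE)
    have "x \<notin> var_term tu" "x \<notin> var_term tw" using pi_no_x[OF assms(1) m(2)] pi_no_x[OF assms(2) m(3)] by blast+
    then have nx: "x \<notin> var_term m" using m(1) unfolding var_term_def by blast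
    have "implicant tu f0" "implicant tw f1" using m(2,3) unfolding prime_implicant_def by blast+
    then have "implicant m f0" "implicant m f1" using implicant_mono[of _ _ m] m(1,4) by blast+
    then show ?thesis using lemB[OF assms(1,2) nx] by blast
  qed
  have below: "\<exists>m\<in>M. m \<subseteq> s" if "implicant s ?F" "x \<notin> var_term s" for s
  proof -
    have "implicant s f0" "implicant s f1" using lemB[OF assms(1,2) that(2)] that(1) by blast+
    then obtain tu tw where tt: "tu \<subseteq> s" "prime_implicant tu f0" "tw \<subseteq> s" "prime_implicant tw f1"
      using exists_prime[of s f0] exists_prime[of s f1] by blast
    have "is_term s" using that(1) unfolding implicant_def by blast
    then have ist: "is_term (tu \<union> tw)" using is_term_subset[of s "tu \<union> tw"] tt(1,3) by blast
    have "tu \<union> tw \<in> M" unfolding M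
      by (intro exI[of _ tu] exI[of _ tw]) (simp add: tt(2,4) ist)
    then show ?thesis using tt(1,3) by blast
  qed
  show ?thesis
  proof
    assume p: "?P t"
    then have "implicant t ?F" unfolding prime_implicant_def by blast
    then obtain m where m: "m \<in> M" "m \<subseteq> t" using below assms(3) by blast
    have "m = t" using prime_crit[OF p m(2) Mimp[OF m(1)]] .
    then have tM: "t \<in> M" using m by simp
    have "\<not> (\<exists>t'\<in>M. t' \<noteq> t \<and> term_entails t t')"
    proof
      assume "\<exists>t'\<in>M. t' \<noteq> t \<and> term_entails t t'"
      then obtain t' where t': "t' \<in> M" "t' \<noteq> t" "term_entails t t'" by blast
      have "is_term t" using p unfolding prime_implicant_def implicant_def by blast
      then have "t' \<subseteq> t" using entails_subset t'(3) by blast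
      then have "t' = t" using prime_crit[OF p _ Mimp[OF t'(1)]] by blast
      then show False using t'(2) by blast
    qed
    then show "t \<in> max_ent M" using tM max_ent_iff by blast
  next
    assume h: "t \<in> max_ent M"
    then have tM: "t \<in> M" and mx: "\<not> (\<exists>t'\<in>M. t' \<noteq> t \<and> term_entails t t')"
      using max_ent_iff by blast+
    have it: "implicant t ?F" using Mimp[OF tM] .
    show "?P t" unfolding prime_implicant_def
    proof (intro conjI it ballI notI)
      fix l assume l: "l \<in> t" and i: "implicant (t - {l}) ?F"
      have "x \<notin> var_term (t - {l})" using assms(3) unfolding var_term_def by blast
      then obtain m where m: "m \<in> M" "m \<subseteq> t - {l}" using below i by blast
      then have "m \<noteq> t" "m \<subseteq> t" using l by blast+
      then show False using mx m(1) subset_entails[of m t] by blast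
    qed
  qed
qed

lemma fwd:
  assumes "indep x f0" "indep x f1" "prime_implicant t (if b then f1 else f0)"
  shows "x \<notin> var_term t \<and> (prime_implicant t (\<lambda>\<alpha>. (\<not> \<alpha> x \<and> f0 \<alpha>) \<or> (\<alpha> x \<and> f1 \<alpha>))
     \<or> prime_implicant (insert (x,b) t) (\<lambda>\<alpha>. (\<not> \<alpha> x \<and> f0 \<alpha>) \<or> (\<alpha> x \<and> f1 \<alpha>)))"
proof -
  have ib: "indep x (if b then f1 else f0)" using assms(1,2) by simp
  have xt: "x \<notin> var_term t" using pi_no_x[OF ib assms(3)] .
  show ?thesis
  proof (cases "implicant t (if b then f0 else f1)")
    case False
    then show ?thesis using posPI[OF assms(1,2) xt assms(3)] xt by blast
  next
    case True
    have it: "implicant t f0 \<and> implicant t f1" using True assms(3) unfolding prime_implicant_def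
      by (cases b) auto
    have "prime_implicant t (\<lambda>\<alpha>. (\<not> \<alpha> x \<and> f0 \<alpha>) \<or> (\<alpha> x \<and> f1 \<alpha>))"
      unfolding prime_implicant_def
    proof (intro conjI ballI notI)
      show "implicant t (\<lambda>\<alpha>. (\<not> \<alpha> x \<and> f0 \<alpha>) \<or> (\<alpha> x \<and> f1 \<alpha>))"
        using lemB[OF assms(1,2) xt] it by blast
      fix l assume l: "l \<in> t" and i: "implicant (t - {l}) (\<lambda>\<alpha>. (\<not> \<alpha> x \<and> f0 \<alpha>) \<or> (\<alpha> x \<and> f1 \<alpha>))"
      have "x \<notin> var_term (t - {l})" using xt unfolding var_term_def by blast
      then have "implicant (t - {l}) f0 \<and> implicant (t - {l}) f1" using lemB[OF assms(1,2)] i by blast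
      then have "implicant (t - {l}) (if b then f1 else f0)" by simp
      then show False using assms(3) l unfolding prime_implicant_def by blast
    qed
    then show ?thesis using xt by blast
  qed
qed

lemma bwd:
  assumes "indep x f0" "indep x f1"
    and p: "prime_implicant t (\<lambda>\<alpha>. (\<not> \<alpha> x \<and> f0 \<alpha>) \<or> (\<alpha> x \<and> f1 \<alpha>))" and xb: "(x,b) \<in> t"
  shows "x \<notin> var_term (t - {(x,b)}) \<and> prime_implicant (t - {(x,b)}) (if b then f1 else f0)
     \<and> \<not> implicant (t - {(x,b)}) (\<lambda>\<alpha>. (\<not> \<alpha> x \<and> f0 \<alpha>) \<or> (\<alpha> x \<and> f1 \<alpha>))"
proof -
  have it: "is_term t" using p unfolding prime_implicant_def implicant_def by blast
  have nb: "(x, \<not> b) \<notin> t" using it xb unfolding is_term_def by (cases b) auto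
  have xt: "x \<notin> var_term (t - {(x,b)})"
  proof
    assume "x \<in> var_term (t - {(x,b)})"
    then obtain l where l: "l \<in> t - {(x,b)}" "fst l = x" unfolding var_term_def by blast
    then have "(x, snd l) \<in> t - {(x,b)}" by (cases l) simp
    then show False using nb by (cases b; cases "snd l") auto
  qed
  have eq: "insert (x,b) (t - {(x,b)}) = t" using xb by blast
  have "prime_implicant (t - {(x,b)}) (if b then f1 else f0)"
    using negPI[OF assms(1,2) xt] p eq by simp
  moreover have "\<not> implicant (t - {(x,b)}) (\<lambda>\<alpha>. (\<not> \<alpha> x \<and> f0 \<alpha>) \<or> (\<alpha> x \<and> f1 \<alpha>))"
    using p xb unfolding prime_implicant_def by blast
  ultimately show ?thesis using xt by blast
qed

theorem proposition9:
  fixes x :: 'v and u w :: "'v circuit" and S :: "'v trm set"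
  assumes "dec_dnnf (CDec x u w)"
    and "S \<subseteq> IP (CDec x u w)"
  defines "Su \<equiv> {t. x \<notin> var_term t \<and> insert (x, False) t \<in> S} \<union> (S \<inter> IP u)"
    and "Sw \<equiv> {t. x \<notin> var_term t \<and> insert (x, True) t \<in> S} \<union> (S \<inter> IP w)"
    and "S' \<equiv> {t. t \<in> S \<and> x \<notin> var_term t}"
  shows "Su \<subseteq> IP u \<and> Sw \<subseteq> IP w \<and>
    (S = IP (CDec x u w) \<longleftrightarrow>
      (Su = IP u \<and> Sw = IP w \<and>
       S' = max_ent {tu \<union> tw | tu tw. tu \<in> Su \<and> tw \<in> Sw \<and> is_term (tu \<union> tw)}))"
proof -
  let ?F = "\<lambda>\<alpha>. (\<not> \<alpha> x \<and> eval u \<alpha>) \<or> (\<alpha> x \<and> eval w \<alpha>)"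
  have Feq: "eval (CDec x u w) = ?F" by (rule ext) simp
  have i0: "indep x (eval u)" using assms(1) indep_eval[of x u] by simp
  have i1: "indep x (eval w)" using assms(1) indep_eval[of x w] by simp
  have IPF: "t \<in> IP (CDec x u w) \<longleftrightarrow> prime_implicant t ?F" for t
    unfolding IP_def Feq by simp
  have IPc: "t \<in> IP c \<longleftrightarrow> prime_implicant t (eval c)" for t c
    unfolding IP_def by simp
  have SF: "t \<in> S \<Longrightarrow> prime_implicant t ?F" for t using assms(2) IPF by blast
  define M where "M = {tu \<union> tw | tu tw. tu \<in> IP u \<and> tw \<in> IP w \<and> is_term (tu \<union> tw)}"
  have Mm: "m \<in> M \<longleftrightarrow> (\<exists>tu tw. m = tu \<union> tw \<and> prime_implicant tu (eval u) \<and> prime_implicant tw (eval w) \<and> is_term m)" for m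
    unfolding M_def IP_def by auto
  have MC: "x \<notin> var_term t \<Longrightarrow> prime_implicant t ?F \<longleftrightarrow> t \<in> max_ent M" for t
    using lemC[OF i0 i1 _ Mm] by blast
  have Mx: "t \<in> max_ent M \<Longrightarrow> x \<notin> var_term t" for t
  proof -
    assume "t \<in> max_ent M"
    then have "t \<in> M" using max_ent_iff by blast
    then obtain tu tw where m: "t = tu \<union> tw" "prime_implicant tu (eval u)" "prime_implicant tw (eval w)"
      unfolding Mm by (elim exE conjE)
    have "x \<notin> var_term tu" "x \<notin> var_term tw" using pi_no_x[OF i0 m(2)] pi_no_x[OF i1 m(3)] by blast+
    then show ?thesis using m(1) unfolding var_term_def by blast
  qed
  have negU: "t0 \<in> IP u" if "x \<notin> var_term t0" "insert (x,False) t0 \<in> S" for t0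
    using negPI[OF i0 i1 that(1), of False] SF[OF that(2)] by (simp add: IP_def)
  have negW: "t0 \<in> IP w" if "x \<notin> var_term t0" "insert (x,True) t0 \<in> S" for t0
    using negPI[OF i0 i1 that(1), of True] SF[OF that(2)] by (simp add: IP_def)
  have A: "Su \<subseteq> IP u" unfolding Su_def using negU by blast
  have B: "Sw \<subseteq> IP w" unfolding Sw_def using negW by blast
  have C: "S = IP (CDec x u w) \<longleftrightarrow> (Su = IP u \<and> Sw = IP w \<and> S' = max_ent M)"
  proof
    assume SE: "S = IP (CDec x u w)"
    have "IP u \<subseteq> Su"
    proof
      fix t assume "t \<in> IP u"
      then have "prime_implicant t (if False then eval w else eval u)" by (simp add: IP_def)
      from fwd[OF i0 i1 this] have "x \<notin> var_term t \<and> (t \<in> S \<or> insert (x,False) t \<in> S)"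
        using SE IPF by simp
      then show "t \<in> Su" unfolding Su_def using \<open>t \<in> IP u\<close> by blast
    qed
    moreover have "IP w \<subseteq> Sw"
    proof
      fix t assume "t \<in> IP w"
      then have "prime_implicant t (if True then eval w else eval u)" by (simp add: IP_def)
      from fwd[OF i0 i1 this] have "x \<notin> var_term t \<and> (t \<in> S \<or> insert (x,True) t \<in> S)"
        using SE IPF by simp
      then show "t \<in> Sw" unfolding Sw_def using \<open>t \<in> IP w\<close> by blast
    qed
    moreover have "S' = max_ent M"
    proof (intro set_eqI iffI)
      fix t assume "t \<in> S'"
      then have "t \<in> S" "x \<notin> var_term t" unfolding S'_def by blast+
      then show "t \<in> max_ent M" using MC SF by blast
    next
      fix t assume t: "t \<in> max_ent M"
      then have "x \<notin> var_term t" using Mx by blast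
      then have "t \<in> S" using MC t SE IPF by blast
      then show "t \<in> S'" unfolding S'_def using \<open>x \<notin> var_term t\<close> by blast
    qed
    ultimately show "Su = IP u \<and> Sw = IP w \<and> S' = max_ent M" using A B by blast
  next
    assume h: "Su = IP u \<and> Sw = IP w \<and> S' = max_ent M"
    show "S = IP (CDec x u w)"
    proof
      show "S \<subseteq> IP (CDec x u w)" using assms(2) .
      show "IP (CDec x u w) \<subseteq> S"
      proof
        fix t assume "t \<in> IP (CDec x u w)"
        then have p: "prime_implicant t ?F" using IPF by blast
        show "t \<in> S"
        proof (cases "x \<in> var_term t")
          case False
          then have "t \<in> max_ent M" using MC p by blast
          then have "t \<in> S'" using h by simp
          then show ?thesis unfolding S'_def by blast
        next
          case True
          then obtain b where xb: "(x,b) \<in> t" unfolding var_term_def by force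
          have eq: "insert (x,b) (t - {(x,b)}) = t" using xb by blast
          note bw = bwd[OF i0 i1 p xb]
          show ?thesis
          proof (cases b)
            case True
            then have "prime_implicant (t - {(x,b)}) (eval w)" using bw by simp
            then have "t - {(x,b)} \<in> Sw" using h by (simp add: IP_def)
            moreover have "t - {(x,b)} \<notin> S" using bw SF unfolding prime_implicant_def by blast
            ultimately have "insert (x, True) (t - {(x,b)}) \<in> S" unfolding Sw_def by blast
            then show ?thesis using eq True by simp
          next
            case False
            then have "prime_implicant (t - {(x,b)}) (eval u)" using bw by simp
            then have "t - {(x,b)} \<in> Su" using h by (simp add: IP_def)
            moreover have "t - {(x,b)} \<notin> S" using bw SF unfolding prime_implicant_def by blast
            ultimately have "insert (x, False) (t - {(x,b)}) \<in> S" unfolding Su_def by blast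
            then show ?thesis using eq False by simp
          qed
        qed
      qed
    qed
  qed
  have MS: "Su = IP u \<Longrightarrow> Sw = IP w \<Longrightarrow>
     {tu \<union> tw | tu tw. tu \<in> Su \<and> tw \<in> Sw \<and> is_term (tu \<union> tw)} = M"
    unfolding M_def by simp
  have D: "S = IP (CDec x u w) \<longleftrightarrow> (Su = IP u \<and> Sw = IP w \<and>
       S' = max_ent {tu \<union> tw | tu tw. tu \<in> Su \<and> tw \<in> Sw \<and> is_term (tu \<union> tw)})"
  proof
    assume "S = IP (CDec x u w)"
    then have e: "Su = IP u" "Sw = IP w" "S' = max_ent M" using C by blast+
    then show "Su = IP u \<and> Sw = IP w \<and>
       S' = max_ent {tu \<union> tw | tu tw. tu \<in> Su \<and> tw \<in> Sw \<and> is_term (tu \<union> tw)}"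
      using MS[OF e(1,2)] by simp
  next
    assume h2: "Su = IP u \<and> Sw = IP w \<and>
       S' = max_ent {tu \<union> tw | tu tw. tu \<in> Su \<and> tw \<in> Sw \<and> is_term (tu \<union> tw)}"
    then have "S' = max_ent M" using MS by simp
    then show "S = IP (CDec x u w)" using C h2 by blast
  qed
  show ?thesis by (rule conjI[OF A conjI[OF B D]])
qed

end
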